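(* Let $q\ge1$, $M>0$, and let $\{J_i\}_{i=1}^m$ be an assignment satisfying $\mathbb{E}\big[(\sum_{i=1}^m(\sum_{j\in J_i}Y_j)^q)^{1/q}\big]\le M$. Then $\sum_{i=1}^m\big(\sum_{j\in J_i}\mathbb{E}[Y'_j]\big)^q\le M^q$.
   Context: Nonnegative random variables $X_{ij}$ (size of job $j$ on machine $i$), independent across different jobs. For an assignment $\{J_i\}$ (partition of $[n]$), $Y_j:=X_{ij}$ where $j\in J_i$. Truncated part $Y'_j:=Y_j\mathbf{1}[Y_j\le M]$. *)

theory Defs
  imports "HOL-Probability.Probability"
begin

text \<open>Machines are indexed by i < m, jobs by j < n. X i j is the (random) size of
job j on machine i. An assignment is a family J i (i < m) partitioning {..<n}
(parts may be empty).\<close>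

definition is_assignment :: "nat \<Rightarrow> nat \<Rightarrow> (nat \<Rightarrow> nat set) \<Rightarrow> bool" where
  "is_assignment m n J \<longleftrightarrow>
     (\<Union>i<m. J i) = {..<n} \<and> (\<forall>i<m. \<forall>i'<m. i \<noteq> i' \<longrightarrow> J i \<inter> J i' = {})"

definition assigned_size ::
  "nat \<Rightarrow> (nat \<Rightarrow> nat set) \<Rightarrow> (nat \<Rightarrow> nat \<Rightarrow> 'a \<Rightarrow> real) \<Rightarrow> nat \<Rightarrow> 'a \<Rightarrow> real" where
  "assigned_size m J X j \<omega> = X (THE i. i < m \<and> j \<in> J i) j \<omega>"

definition truncated_size ::
  "real \<Rightarrow> nat \<Rightarrow> (nat \<Rightarrow> nat set) \<Rightarrow> (nat \<Rightarrow> nat \<Rightarrow> 'a \<Rightarrow> real) \<Rightarrow> nat \<Rightarrow> 'a \<Rightarrow> real" where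
  "truncated_size M m J X j \<omega> =
     (if assigned_size m J X j \<omega> \<le> M then assigned_size m J X j \<omega> else 0)"

end

theory Submission imports Defs begin

lemma tangent:
  fixes x y q :: real
  assumes "x \<ge> 0" "y \<ge> 0" "q \<ge> 1"
  shows "q * (x powr (q-1)) * y \<le> y powr q + (q-1) * x powr q"
proof (cases "q = 1")
  case True
  have "x powr 0 \<le> 1" by (simp add: powr_def)
  then have "x powr 0 * y \<le> y" using assms by (simp add: mult_le_cancel_right1)
  then show ?thesis using True assms by simp
next
  case False
  then have q1: "q > 1" using assms by simp
  have "x powr (q-1) * y \<le> (x powr (q-1)) powr (q/(q-1)) / (q/(q-1)) + y powr q / q"
    by (rule Youngs_inequality) (use q1 assms in \<open>auto simp: field_simps\<close>)
  also have "(x powr (q-1)) powr (q/(q-1)) = x powr q"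
    using q1 by (simp add: powr_powr)
  finally have "x powr (q-1) * y \<le> x powr q * (q-1) / q + y powr q / q" by simp
  then have "q * (x powr (q-1) * y) \<le> q * (x powr q * (q-1) / q + y powr q / q)"
    using q1 by simp
  moreover have "q * (x powr q * (q-1) / q + y powr q / q) = x powr q * (q-1) + y powr q"
    using q1 by (simp add: field_simps)
  ultimately show ?thesis by (simp add: algebra_simps)
qed

lemma dual:
  fixes a z :: "nat \<Rightarrow> real" and q S :: real and I :: "nat set"
  assumes fin: "finite I" and q: "q \<ge> 1" and a: "\<And>i. i \<in> I \<Longrightarrow> a i \<ge> 0"
    and z: "\<And>i. i \<in> I \<Longrightarrow> z i \<ge> 0" and S: "S = (\<Sum>i\<in>I. a i powr q)" "S > 0"
  shows "(\<Sum>i\<in>I. a i powr (q-1) * z i) \<le> S powr ((q-1)/q) * (\<Sum>i\<in>I. z i powr q) powr (1/q)"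
proof -
  define N where "N = (\<Sum>i\<in>I. z i powr q) powr (1/q)"
  have Zs: "(\<Sum>i\<in>I. z i powr q) \<ge> 0" by (simp add: sum_nonneg)
  show ?thesis
  proof (cases "N = 0")
    case True
    then have "(\<Sum>i\<in>I. z i powr q) = 0" unfolding N_def by simp
    then have "\<forall>i\<in>I. z i powr q = 0" using fin by (subst (asm) sum_nonneg_eq_0_iff) auto
    then have "\<forall>i\<in>I. z i = 0" by simp
    then show ?thesis using S by (simp add: sum_nonneg)
  next
    case False
    then have Npos: "N > 0" unfolding N_def using Zs by simp
    have Nq: "N powr q = (\<Sum>i\<in>I. z i powr q)" unfolding N_def using Zs q by (simp add: powr_powr)
    define s where "s = S powr (1/q)"
    have spos: "s > 0" using S s_def by simp
    have sq: "s powr q = S" unfolding s_def using S q by (simp add: powr_powr)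
    have key: "\<And>i. i \<in> I \<Longrightarrow> q * ((a i / s) powr (q-1)) * (z i / N)
          \<le> (z i / N) powr q + (q-1) * (a i / s) powr q"
      by (rule tangent) (use a z spos Npos q in auto)
    have e1: "(\<Sum>i\<in>I. q * ((a i / s) powr (q-1)) * (z i / N))
       \<le> (\<Sum>i\<in>I. (z i / N) powr q + (q-1) * (a i / s) powr q)"
      by (rule sum_mono) (rule key)
    have e2: "(\<Sum>i\<in>I. (z i / N) powr q + (q-1) * (a i / s) powr q) = (\<Sum>i\<in>I. z i powr q) / N powr q + (q-1) * ((\<Sum>i\<in>I. a i powr q) / s powr q)"
      using a z spos Npos
      by (simp add: powr_divide sum.distrib sum_divide_distrib sum_distrib_left)
    have "N powr q > 0" using Npos by simp
    then have e3: "(\<Sum>i\<in>I. z i powr q) / N powr q = 1" using Nq by simp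
    have e4: "(\<Sum>i\<in>I. a i powr q) / s powr q = 1" using sq S by simp
    from e1 e2 e3 e4 have A: "(\<Sum>i\<in>I. q * ((a i / s) powr (q-1)) * (z i / N)) \<le> q" by simp
    have "(\<Sum>i\<in>I. q * ((a i / s) powr (q-1)) * (z i / N))
        = q / (s powr (q-1) * N) * (\<Sum>i\<in>I. a i powr (q-1) * z i)"
      using a spos Npos by (simp add: powr_divide sum_distrib_left field_simps)
    with A have "q / (s powr (q-1) * N) * (\<Sum>i\<in>I. a i powr (q-1) * z i) \<le> q" by simp
    then have "(\<Sum>i\<in>I. a i powr (q-1) * z i) \<le> s powr (q-1) * N"
      using q spos Npos by (simp add: field_simps)
    also have "s powr (q-1) = S powr ((q-1)/q)" unfolding s_def using S by (simp add: powr_powr)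
    finally show ?thesis unfolding N_def .
  qed
qed


theorem mainTheorem12:
  fixes P :: "'a measure" and X :: "nat \<Rightarrow> nat \<Rightarrow> 'a \<Rightarrow> real"
    and m n :: nat and J :: "nat \<Rightarrow> nat set" and q M :: real
  assumes "prob_space P"
    and meas: "\<And>i j. i < m \<Longrightarrow> j < n \<Longrightarrow> X i j \<in> borel_measurable P"
    and nonneg: "\<And>i j \<omega>. i < m \<Longrightarrow> j < n \<Longrightarrow> \<omega> \<in> space P \<Longrightarrow> X i j \<omega> \<ge> 0"
    and indep: "prob_space.indep_vars P (\<lambda>_. PiM {..<m} (\<lambda>_. borel))
                  (\<lambda>j \<omega>. \<lambda>i\<in>{..<m}. X i j \<omega>) {..<n}"
    and "q \<ge> 1" and "M > 0"
    and "is_assignment m n J"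
    and hyp: "(\<integral>\<^sup>+ \<omega>. ennreal ((\<Sum>i<m. (\<Sum>j\<in>J i. assigned_size m J X j \<omega>) powr q) powr (1 / q)) \<partial>P)
              \<le> ennreal M"
  shows "(\<Sum>i<m. (\<Sum>j\<in>J i. integral\<^sup>L P (truncated_size M m J X j)) powr q) \<le> M powr q"
proof -
  interpret prob_space P by fact
  note q = \<open>q \<ge> 1\<close> and Mpos = \<open>M > 0\<close>
  define Y where "Y = assigned_size m J X"
  define T where "T = truncated_size M m J X"
  have Jsub: "\<And>i. i < m \<Longrightarrow> J i \<subseteq> {..<n}"
    using \<open>is_assignment m n J\<close> unfolding is_assignment_def by blast
  have Jfin: "\<And>i. i < m \<Longrightarrow> finite (J i)" using Jsub finite_subset by blast
  have disj: "\<And>i i'. i < m \<Longrightarrow> i' < m \<Longrightarrow> i \<noteq> i' \<Longrightarrow> J i \<inter> J i' = {}"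
    using \<open>is_assignment m n J\<close> unfolding is_assignment_def by blast
  have Yeq: "\<And>i j. i < m \<Longrightarrow> j \<in> J i \<Longrightarrow> Y j = X i j"
  proof -
    fix i j assume ij: "i < m" "j \<in> J i"
    have "(THE i'. i' < m \<and> j \<in> J i') = i"
      by (rule the_equality) (use ij disj in blast)+
    then show "Y j = X i j" unfolding Y_def assigned_size_def[abs_def] by simp
  qed
  have Teq: "\<And>i j. i < m \<Longrightarrow> j \<in> J i \<Longrightarrow> T j = (\<lambda>\<omega>. if X i j \<omega> \<le> M then X i j \<omega> else 0)"
    unfolding T_def truncated_size_def[abs_def] using Yeq unfolding Y_def by auto
  have Ymeas: "\<And>i j. i < m \<Longrightarrow> j \<in> J i \<Longrightarrow> Y j \<in> borel_measurable P"
    using Yeq meas Jsub by (metis lessThan_iff subsetD)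
  have Tmeas: "\<And>i j. i < m \<Longrightarrow> j \<in> J i \<Longrightarrow> T j \<in> borel_measurable P"
  proof -
    fix i j assume ij: "i < m" "j \<in> J i"
    have "X i j \<in> borel_measurable P" using meas ij Jsub by (metis lessThan_iff subsetD)
    then show "T j \<in> borel_measurable P" unfolding Teq[OF ij] by measurable
  qed
  have Ynn: "\<And>i j \<omega>. i < m \<Longrightarrow> j \<in> J i \<Longrightarrow> \<omega> \<in> space P \<Longrightarrow> Y j \<omega> \<ge> 0"
    using Yeq nonneg Jsub by (metis lessThan_iff subsetD)
  have Tnn: "\<And>i j \<omega>. i < m \<Longrightarrow> j \<in> J i \<Longrightarrow> \<omega> \<in> space P \<Longrightarrow> 0 \<le> T j \<omega> \<and> T j \<omega> \<le> Y j \<omega> \<and> T j \<omega> \<le> M"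
    using Ynn Mpos unfolding T_def truncated_size_def Y_def by (auto simp: Y_def)
  have Tint: "\<And>i j. i < m \<Longrightarrow> j \<in> J i \<Longrightarrow> integrable P (T j)"
  proof -
    fix i j assume ij: "i < m" "j \<in> J i"
    show "integrable P (T j)"
      by (rule integrable_const_bound[where B=M]) (use Tnn[OF ij] Tmeas[OF ij] in auto)
  qed
  define a where "a i = (\<Sum>j\<in>J i. integral\<^sup>L P (T j))" for i
  define Z where "Z i \<omega> = (\<Sum>j\<in>J i. T j \<omega>)" for i \<omega>
  have aZ: "\<And>i. i < m \<Longrightarrow> a i = integral\<^sup>L P (Z i)"
    unfolding a_def Z_def using Tint by (simp add: integral_sum)
  have Zint: "\<And>i. i < m \<Longrightarrow> integrable P (Z i)"
    unfolding Z_def using Tint by auto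
  have Znn: "\<And>i \<omega>. i < m \<Longrightarrow> \<omega> \<in> space P \<Longrightarrow> 0 \<le> Z i \<omega>"
    unfolding Z_def using Tnn by (auto intro: sum_nonneg)
  have ann: "\<And>i. i < m \<Longrightarrow> a i \<ge> 0"
    using aZ Znn by (auto intro: integral_nonneg)
  define S where "S = (\<Sum>i<m. a i powr q)"
  show ?thesis
  proof (cases "S = 0")
    case True
    then show ?thesis unfolding S_def a_def T_def using Mpos by simp
  next
    case False
    have S0: "S \<ge> 0" unfolding S_def by (simp add: sum_nonneg)
    with False have Spos: "S > 0" by simp
    define F where "F \<omega> = (\<Sum>i<m. (\<Sum>j\<in>J i. Y j \<omega>) powr q) powr (1 / q)" for \<omega>
    define G where "G \<omega> = (\<Sum>i<m. a i powr (q-1) * Z i \<omega>)" for \<omega>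
    have Gint: "integrable P G" unfolding G_def using Zint by auto
    have GS: "integral\<^sup>L P G = S"
    proof -
      have "integral\<^sup>L P G = (\<Sum>i<m. a i powr (q-1) * a i)"
        unfolding G_def using Zint aZ by (simp add: integral_sum)
      also have "\<dots> = S" unfolding S_def
      proof (rule sum.cong)
        fix i assume "i \<in> {..<m}"
        then have "a i \<ge> 0" using ann by simp
        then show "a i powr (q-1) * a i = a i powr q"
          by (cases "a i = 0") (use q powr_add[of "a i" "q-1" 1] in auto)
      qed simp
      finally show ?thesis .
    qed
    have Fmeas: "F \<in> borel_measurable P"
      unfolding F_def using Ymeas by (intro powr_real_measurable borel_measurable_sum borel_measurable_const) auto
    have pw: "\<And>\<omega>. \<omega> \<in> space P \<Longrightarrow> G \<omega> \<le> S powr ((q-1)/q) * F \<omega>"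
    proof -
      fix \<omega> assume w: "\<omega> \<in> space P"
      have "G \<omega> \<le> S powr ((q-1)/q) * (\<Sum>i<m. Z i \<omega> powr q) powr (1/q)"
        unfolding G_def by (rule dual[OF _ q _ _ S_def Spos]) (use ann Znn w in auto)
      also have "(\<Sum>i<m. Z i \<omega> powr q) powr (1/q) \<le> F \<omega>"
        unfolding F_def
      proof (rule powr_mono2)
        show "(\<Sum>i<m. Z i \<omega> powr q) \<le> (\<Sum>i<m. (\<Sum>j\<in>J i. Y j \<omega>) powr q)"
        proof (rule sum_mono)
          fix i assume i: "i \<in> {..<m}"
          show "Z i \<omega> powr q \<le> (\<Sum>j\<in>J i. Y j \<omega>) powr q"
            unfolding Z_def
            by (rule powr_mono2) (use q i w Tnn in \<open>auto intro!: sum_nonneg sum_mono\<close>)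
        qed
      qed (use q Znn w in \<open>auto intro!: sum_nonneg\<close>)
      finally show "G \<omega> \<le> S powr ((q-1)/q) * F \<omega>" using Spos by simp
    qed
    have "ennreal S = (\<integral>\<^sup>+ \<omega>. ennreal (G \<omega>) \<partial>P)"
      using GS Gint Znn ann by (subst nn_integral_eq_integral) (auto simp: G_def intro!: sum_nonneg)
    also have "\<dots> \<le> (\<integral>\<^sup>+ \<omega>. ennreal (S powr ((q-1)/q)) * ennreal (F \<omega>) \<partial>P)"
    proof (intro nn_integral_mono)
      fix x assume x: "x \<in> space P"
      have "ennreal (G x) \<le> ennreal (S powr ((q-1)/q) * F x)" using pw[OF x] by (rule ennreal_leI)
      also have "\<dots> = ennreal (S powr ((q-1)/q)) * ennreal (F x)"
        by (rule ennreal_mult) (auto simp: F_def)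
      finally show "ennreal (G x) \<le> ennreal (S powr ((q-1)/q)) * ennreal (F x)" .
    qed
    also have "\<dots> = ennreal (S powr ((q-1)/q)) * (\<integral>\<^sup>+ \<omega>. ennreal (F \<omega>) \<partial>P)"
      using Fmeas by (intro nn_integral_cmult) auto
    also have "\<dots> \<le> ennreal (S powr ((q-1)/q)) * ennreal M"
      using hyp unfolding F_def Y_def by (intro mult_left_mono) auto
    also have "\<dots> = ennreal (S powr ((q-1)/q) * M)" using Mpos by (simp add: ennreal_mult)
    finally have SM: "S \<le> S powr ((q-1)/q) * M" using Mpos by (simp add: ennreal_le_iff)
    have "S = S powr ((q-1)/q) * S powr (1/q)"
      using Spos q by (simp add: powr_add[symmetric] add_divide_distrib[symmetric])
    with SM have "S powr ((q-1)/q) * S powr (1/q) \<le> S powr ((q-1)/q) * M" by linarith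
    moreover have "S powr ((q-1)/q) > 0" using Spos by simp
    ultimately have "S powr (1/q) \<le> M" by (simp add: mult_le_cancel_left_pos)
    then have "(S powr (1/q)) powr q \<le> M powr q" using q Spos by (intro powr_mono2) auto
    then show ?thesis using Spos q unfolding S_def a_def T_def by (simp add: powr_powr)
  qed
qed

end
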